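(* Let $M_n=V\,{\rm diag}(\Lambda_{n1},\dots,\Lambda_{nd})V^{-1}$, $n=1,\dots,N$, with $V$ real invertible and $\Lambda_{ni}$ real, such that $\gamma=\min_{i>i'}\sum_{n=1}^N(\Lambda_{ni}-\Lambda_{ni'})^2>0$, and let $U_\circ$ be an orthogonal matrix with ${\rm low}(U_\circ^TM_nU_\circ)=0$ for all $n$. Then $$T=\sum_nt_n^Tt_n,\qquad t_n=P_{\rm low}\big(1\otimes U_\circ^TM_n^TU_\circ-U_\circ^TM_nU_\circ\otimes1\big)P_{\rm low}^T$$ is invertible, and $\sigma_{\min}(T)\ge\frac{\gamma}{\kappa(V)^4}$ and $\|T^{-1}\|\le\sqrt{\frac{d(d-1)}2}\,\frac{\kappa(V)^4}{\gamma}$.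
   Context: All matrices are real. ${\rm low}(A)$ is the strictly lower-triangular part of $A$. $\otimes$ is the Kronecker product, $1$ the identity. $P_{\rm low}\in\{0,1\}^{\frac{d(d-1)}2\times d^2}$ has as rows the standard basis row vectors of $\mathbb R^{d^2}$ selecting (in increasing order) the entries of the column-wise vectorization ${\rm vec}(A)$ corresponding to strictly lower-triangular entries of $A$. $\|\cdot\|$ is the Frobenius norm, $\sigma_{\min}$ the smallest singular value, $\kappa(V)=\sigma_{\max}(V)/\sigma_{\min}(V)$. *)

theory Defs
  imports "Jordan_Normal_Form.Matrix"
begin

definition low_part :: "real mat \<Rightarrow> real mat" where
  "low_part A = mat (dim_row A) (dim_col A) (\<lambda>(i,j). if j < i then A $$ (i,j) else 0)"

definition kron :: "real mat \<Rightarrow> real mat \<Rightarrow> real mat" where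
  "kron A B = mat (dim_row A * dim_row B) (dim_col A * dim_col B)
     (\<lambda>(i,j). A $$ (i div dim_row B, j div dim_col B) * B $$ (i mod dim_row B, j mod dim_col B))"

(* Column-wise vectorization of a d x d matrix: position k (0-based) holds entry
   (k mod d, k div d).  low_positions d lists, in increasing order, the positions k
   corresponding to strictly lower-triangular entries (row > column). *)
definition low_positions :: "nat \<Rightarrow> nat list" where
  "low_positions d = filter (\<lambda>k. k div d < k mod d) [0..<d*d]"

definition P_low :: "nat \<Rightarrow> real mat" where
  "P_low d = mat (length (low_positions d)) (d*d) (\<lambda>(r,k). if low_positions d ! r = k then 1 else 0)"

definition frob_norm :: "real mat \<Rightarrow> real" where
  "frob_norm A = sqrt (\<Sum>i<dim_row A. \<Sum>j<dim_col A. (A $$ (i,j))^2)"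

definition vnorm :: "real vec \<Rightarrow> real" where
  "vnorm x = sqrt (x \<bullet> x)"

definition sigma_max :: "real mat \<Rightarrow> real" where
  "sigma_max A = Sup {vnorm (A *\<^sub>v x) | x. x \<in> carrier_vec (dim_col A) \<and> vnorm x = 1}"

definition sigma_min :: "real mat \<Rightarrow> real" where
  "sigma_min A = Inf {vnorm (A *\<^sub>v x) | x. x \<in> carrier_vec (dim_col A) \<and> vnorm x = 1}"

definition kappa :: "real mat \<Rightarrow> real" where
  "kappa V = sigma_max V / sigma_min V"

definition minv :: "real mat \<Rightarrow> real mat" where
  "minv A = (SOME B. B \<in> carrier_mat (dim_row A) (dim_row A) \<and>
                     A * B = 1\<^sub>m (dim_row A) \<and> B * A = 1\<^sub>m (dim_row A))"

definition diag_of :: "nat \<Rightarrow> (nat \<Rightarrow> real) \<Rightarrow> real mat" where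
  "diag_of d f = mat d d (\<lambda>(i,j). if i = j then f i else 0)"

definition t_mat :: "nat \<Rightarrow> real mat \<Rightarrow> real mat \<Rightarrow> real mat" where
  "t_mat d U M = P_low d *
     (kron (1\<^sub>m d) (transpose_mat U * transpose_mat M * U) - kron (transpose_mat U * M * U) (1\<^sub>m d))
     * transpose_mat (P_low d)"

definition msum :: "nat \<Rightarrow> nat \<Rightarrow> (nat \<Rightarrow> real mat) \<Rightarrow> real mat" where
  "msum k N f = foldr (\<lambda>n acc. f n + acc) [1..<N+1] (0\<^sub>m k k)"

definition gamma_sep :: "nat \<Rightarrow> nat \<Rightarrow> (nat \<Rightarrow> nat \<Rightarrow> real) \<Rightarrow> real" where
  "gamma_sep d N \<Lambda> = Min {(\<Sum>n=1..N. (\<Lambda> n i - \<Lambda> n i')^2) | i i'. i' < i \<and> i < d}"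

end

theory Submission
  imports Defs "Jordan_Normal_Form.Determinant"
begin


lemma cs_sum:
  fixes a b :: "nat \<Rightarrow> real"
  assumes fin: "finite I"
  shows "(\<Sum>i\<in>I. a i * b i)^2 \<le> (\<Sum>i\<in>I. a i * a i) * (\<Sum>i\<in>I. b i * b i)"
proof -
  define A where "A = (\<Sum>i\<in>I. a i * a i)"
  define B where "B = (\<Sum>i\<in>I. b i * b i)"
  define C where "C = (\<Sum>i\<in>I. a i * b i)"
  have B0: "B \<ge> 0" unfolding B_def by (intro sum_nonneg) auto
  have "(\<Sum>i\<in>I. (B*a i - C*b i)^2) = (\<Sum>i\<in>I. B*B*(a i*a i) - 2*B*C*(a i*b i) + C*C*(b i*b i))"
    by (intro sum.cong) (auto simp: power2_eq_square algebra_simps)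
  also have "\<dots> = B*B*A - 2*B*C*C + C*C*B"
    unfolding A_def B_def C_def
    by (simp add: sum.distrib sum_subtractf sum_distrib_left)
  finally have e: "(\<Sum>i\<in>I. (B*a i - C*b i)^2) = B*(A*B - C^2)" by (simp add: power2_eq_square algebra_simps)
  have "0 \<le> (\<Sum>i\<in>I. (B*a i - C*b i)^2)" by (intro sum_nonneg) auto
  hence h: "0 \<le> B*(A*B - C^2)" using e by simp
  show ?thesis
  proof (cases "B = 0")
    case True
    hence "\<forall>i\<in>I. b i * b i = 0" using fin unfolding B_def
      by (subst sum_nonneg_eq_0_iff[symmetric]) auto
    hence "C = 0" unfolding C_def by auto
    have "A \<ge> 0" unfolding A_def by (intro sum_nonneg) auto
    thus ?thesis using \<open>C = 0\<close> B0 unfolding A_def[symmetric] B_def[symmetric] C_def[symmetric] by simp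
  next
    case False
    hence "B > 0" using B0 by simp
    hence "0 \<le> A*B - C^2" using h by (simp add: zero_le_mult_iff)
    thus ?thesis unfolding A_def[symmetric] B_def[symmetric] C_def[symmetric] by (simp add: mult.commute)
  qed
qed

lemma cs_vec:
  fixes x y :: "real vec"
  assumes "x \<in> carrier_vec n" "y \<in> carrier_vec n"
  shows "(x \<bullet> y)^2 \<le> (x \<bullet> x) * (y \<bullet> y)"
  using assms cs_sum[of "{0..<n}" "\<lambda>i. x $ i" "\<lambda>i. y $ i"]
  unfolding scalar_prod_def by auto

lemma sq_nonneg_vec: "(x::real vec) \<bullet> x \<ge> 0"
  unfolding scalar_prod_def by (intro sum_nonneg) auto

lemma sq_zero_vec: assumes "x \<in> carrier_vec n" "(x::real vec) \<bullet> x = 0" shows "x = 0\<^sub>v n"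
proof -
  have "\<forall>i\<in>{0..<n}. x $ i * x $ i = 0" using assms unfolding scalar_prod_def
    by (subst sum_nonneg_eq_0_iff[symmetric]) auto
  thus ?thesis using assms by (intro eq_vecI) auto
qed

definition opb :: "nat \<Rightarrow> real mat \<Rightarrow> real \<Rightarrow> bool" where
  "opb d G c \<longleftrightarrow> (\<forall>y\<in>carrier_vec d. (G *\<^sub>v y) \<bullet> (G *\<^sub>v y) \<le> c * (y \<bullet> y))"

definition fsq :: "nat \<Rightarrow> real mat \<Rightarrow> real" where
  "fsq d H = (\<Sum>i<d. \<Sum>j<d. (H $$ (i,j))^2)"

lemma fsq_cols: assumes "H \<in> carrier_mat d d"
  shows "fsq d H = (\<Sum>j<d. col H j \<bullet> col H j)"
  unfolding fsq_def scalar_prod_def using assms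
  by (subst sum.swap) (auto simp: power2_eq_square lessThan_atLeast0 intro!: sum.cong)

lemma fsq_transpose: assumes "H \<in> carrier_mat d d"
  shows "fsq d (transpose_mat H) = fsq d H"
  unfolding fsq_def using assms by (subst sum.swap) (auto intro!: sum.cong)

lemma fsq_nonneg: "fsq d H \<ge> 0" unfolding fsq_def by (intro sum_nonneg) auto

lemma opb_left: assumes G: "G \<in> carrier_mat d d" and H: "H \<in> carrier_mat d d" and o: "opb d G c"
  shows "fsq d (G * H) \<le> c * fsq d H"
proof -
  have "fsq d (G*H) = (\<Sum>j<d. col (G*H) j \<bullet> col (G*H) j)" by (rule fsq_cols) (use G H in auto)
  also have "\<dots> = (\<Sum>j<d. (G *\<^sub>v col H j) \<bullet> (G *\<^sub>v col H j))"
    by (intro sum.cong refl) (metis col_mult2[OF G H] lessThan_iff)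
  also have "\<dots> \<le> (\<Sum>j<d. c * (col H j \<bullet> col H j))"
    using o H unfolding opb_def by (intro sum_mono) auto
  also have "\<dots> = c * fsq d H" using H by (simp add: fsq_cols sum_distrib_left)
  finally show ?thesis .
qed

lemma opb_right: assumes G: "G \<in> carrier_mat d d" and H: "H \<in> carrier_mat d d"
  and o: "opb d (transpose_mat G) c"
  shows "fsq d (H * G) \<le> c * fsq d H"
proof -
  have "fsq d (H*G) = fsq d (transpose_mat G * transpose_mat H)"
    using G H by (simp add: fsq_transpose[symmetric, of "H*G"] transpose_mult[of H d d G d])
  also have "\<dots> \<le> c * fsq d (transpose_mat H)" using G H o by (intro opb_left) auto
  finally show ?thesis using H by (simp add: fsq_transpose)
qed

lemma opb_comp: assumes G: "G \<in> carrier_mat d d" and H: "H \<in> carrier_mat d d"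
  and "opb d G a" "opb d H b" "a \<ge> 0"
  shows "opb d (G * H) (a * b)"
  unfolding opb_def
proof
  fix y :: "real vec" assume y: "y \<in> carrier_vec d"
  have "(G * H *\<^sub>v y) \<bullet> (G * H *\<^sub>v y) = (G *\<^sub>v (H *\<^sub>v y)) \<bullet> (G *\<^sub>v (H *\<^sub>v y))"
    using G H y by simp
  also have "\<dots> \<le> a * ((H *\<^sub>v y) \<bullet> (H *\<^sub>v y))" using assms(3) H y unfolding opb_def by auto
  also have "\<dots> \<le> a * (b * (y \<bullet> y))" using assms(4,5) y unfolding opb_def
    by (intro mult_left_mono) auto
  finally show "(G * H *\<^sub>v y) \<bullet> (G * H *\<^sub>v y) \<le> a * b * (y \<bullet> y)" by simp
qed

lemma opb_transpose: assumes G: "G \<in> carrier_mat d d" and o: "opb d G c" and c: "c \<ge> 0"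
  shows "opb d (transpose_mat G) c"
  unfolding opb_def
proof
  fix y :: "real vec" assume y: "y \<in> carrier_vec d"
  define z where "z = transpose_mat G *\<^sub>v y"
  have z: "z \<in> carrier_vec d" using G y unfolding z_def by simp
  have "z \<bullet> z = y \<bullet> (G *\<^sub>v z)" unfolding z_def
    using transpose_vec_mult_scalar[OF G _ y] z G by (simp add: z_def)
  hence "(z \<bullet> z)^2 \<le> (y \<bullet> y) * ((G *\<^sub>v z) \<bullet> (G *\<^sub>v z))"
    using cs_vec[OF y, of "G *\<^sub>v z"] G z by simp
  also have "\<dots> \<le> (y \<bullet> y) * (c * (z \<bullet> z))"
    using o z unfolding opb_def by (intro mult_left_mono sq_nonneg_vec) (auto simp: sq_nonneg_vec)
  finally have h: "(z \<bullet> z) * (z \<bullet> z) \<le> (c * (y \<bullet> y)) * (z \<bullet> z)" by (simp add: power2_eq_square algebra_simps)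
  show "(transpose_mat G *\<^sub>v y) \<bullet> (transpose_mat G *\<^sub>v y) \<le> c * (y \<bullet> y)"
  proof (cases "z \<bullet> z = 0")
    case True thus ?thesis using c by (simp add: z_def[symmetric] sq_nonneg_vec)
  next
    case False
    hence "z \<bullet> z > 0" using sq_nonneg_vec[of z] by simp
    thus ?thesis using h unfolding z_def by (simp add: mult_le_cancel_right)
  qed
qed



lemma frob_bound: assumes G: "G \<in> carrier_mat d d" and y: "y \<in> carrier_vec d"
  shows "(G *\<^sub>v y) \<bullet> (G *\<^sub>v y) \<le> fsq d G * (y \<bullet> y)"
proof -
  have "(G *\<^sub>v y) \<bullet> (G *\<^sub>v y) = (\<Sum>i<d. (row G i \<bullet> y)^2)"
    using G y unfolding scalar_prod_def[of "G *\<^sub>v y"] by (auto simp: power2_eq_square lessThan_atLeast0)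
  also have "\<dots> \<le> (\<Sum>i<d. (row G i \<bullet> row G i) * (y \<bullet> y))"
    using G y by (intro sum_mono cs_vec) auto
  also have "\<dots> = fsq d G * (y \<bullet> y)"
    unfolding fsq_def sum_distrib_right using G
    by (intro sum.cong refl) (auto simp: scalar_prod_def power2_eq_square lessThan_atLeast0 sum_distrib_right)
  finally show ?thesis .
qed

lemma unit_sq: "i < d \<Longrightarrow> unit_vec d i \<bullet> unit_vec d i = (1::real)"
  by (subst scalar_prod_left_unit) auto

lemma scale_unit: fixes y :: "real vec" assumes y: "y \<in> carrier_vec d" and nz: "y \<bullet> y \<noteq> 0"
  defines "u \<equiv> (1 / sqrt (y \<bullet> y)) \<cdot>\<^sub>v y"
  shows "u \<in> carrier_vec d" "u \<bullet> u = 1"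
    "\<And>G::real mat. G \<in> carrier_mat d d \<Longrightarrow> (G *\<^sub>v u) \<bullet> (G *\<^sub>v u) = ((G *\<^sub>v y) \<bullet> (G *\<^sub>v y)) / (y \<bullet> y)"
proof -
  have p: "y \<bullet> y > 0" using nz sq_nonneg_vec[of y] by simp
  show "u \<in> carrier_vec d" using y unfolding u_def by simp
  show "u \<bullet> u = 1" using y p unfolding u_def
    by (simp add: power2_eq_square[symmetric])
  fix G :: "real mat" assume G: "G \<in> carrier_mat d d"
  have "G *\<^sub>v u = (1 / sqrt (y \<bullet> y)) \<cdot>\<^sub>v (G *\<^sub>v y)" unfolding u_def by (rule mult_mat_vec[OF G y])
  thus "(G *\<^sub>v u) \<bullet> (G *\<^sub>v u) = ((G *\<^sub>v y) \<bullet> (G *\<^sub>v y)) / (y \<bullet> y)"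
    using G y p by (simp add: power2_eq_square[symmetric])
qed

lemma sigma_facts:
  assumes V: "V \<in> carrier_mat d d" and Vi: "Vi \<in> carrier_mat d d"
    and ViV: "Vi * V = 1\<^sub>m d" and d: "d \<ge> 1"
  shows "sigma_min V > 0" "sigma_min V \<le> sigma_max V"
    "\<And>y. y \<in> carrier_vec d \<Longrightarrow> (sigma_min V)^2 * (y \<bullet> y) \<le> (V *\<^sub>v y) \<bullet> (V *\<^sub>v y)"
    "\<And>y. y \<in> carrier_vec d \<Longrightarrow> (V *\<^sub>v y) \<bullet> (V *\<^sub>v y) \<le> (sigma_max V)^2 * (y \<bullet> y)"
proof -
  define E where "E = {vnorm (V *\<^sub>v x) | x. x \<in> carrier_vec (dim_col V) \<and> vnorm x = 1}"
  have dc: "dim_col V = d" using V by simp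
  have smin: "sigma_min V = Inf E" unfolding sigma_min_def E_def ..
  have smax: "sigma_max V = Sup E" unfolding sigma_max_def E_def ..
  have Ein: "\<And>x. x \<in> carrier_vec d \<Longrightarrow> x \<bullet> x = 1 \<Longrightarrow> vnorm (V *\<^sub>v x) \<in> E"
    unfolding E_def vnorm_def dc by auto
  have ne: "E \<noteq> {}" using Ein[of "unit_vec d 0"] d unit_sq[of 0 d] by auto
  have fVi: "fsq d Vi > 0"
  proof -
    have "fsq d Vi \<noteq> 0"
    proof
      assume "fsq d Vi = 0"
      hence "\<forall>y\<in>carrier_vec d. (Vi *\<^sub>v y) \<bullet> (Vi *\<^sub>v y) \<le> 0" using frob_bound[OF Vi] by fastforce
      hence "(Vi *\<^sub>v (V *\<^sub>v unit_vec d 0)) \<bullet> (Vi *\<^sub>v (V *\<^sub>v unit_vec d 0)) \<le> 0" using V by auto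
      moreover have "Vi *\<^sub>v (V *\<^sub>v unit_vec d 0) = unit_vec d 0"
        using assoc_mult_mat_vec[OF Vi V, of "unit_vec d 0"] ViV by simp
      ultimately show False using unit_sq[of 0 d] d by simp
    qed
    thus ?thesis using fsq_nonneg[of d Vi] by simp
  qed
  define lb where "lb = 1 / sqrt (fsq d Vi)"
  have lbp: "lb > 0" using fVi unfolding lb_def by simp
  have lower: "\<And>e. e \<in> E \<Longrightarrow> lb \<le> e"
  proof -
    fix e assume "e \<in> E"
    then obtain x where x: "x \<in> carrier_vec d" "vnorm x = 1" and e: "e = vnorm (V *\<^sub>v x)"
      unfolding E_def dc by auto
    have xx: "x \<bullet> x = 1" using x(2) sq_nonneg_vec[of x] unfolding vnorm_def by simp
    have "x = Vi *\<^sub>v (V *\<^sub>v x)" using assoc_mult_mat_vec[OF Vi V x(1)] ViV x by simp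
    hence "x \<bullet> x \<le> fsq d Vi * ((V *\<^sub>v x) \<bullet> (V *\<^sub>v x))" using frob_bound[OF Vi, of "V *\<^sub>v x"] V x by simp
    hence "1 / fsq d Vi \<le> (V *\<^sub>v x) \<bullet> (V *\<^sub>v x)" using xx fVi by (simp add: field_simps)
    hence "sqrt (1 / fsq d Vi) \<le> e" unfolding e vnorm_def by (rule real_sqrt_le_mono)
    thus "lb \<le> e" unfolding lb_def by (simp add: real_sqrt_divide)
  qed
  have upper: "\<And>e. e \<in> E \<Longrightarrow> e \<le> sqrt (fsq d V)"
  proof -
    fix e assume "e \<in> E"
    then obtain x where x: "x \<in> carrier_vec d" "vnorm x = 1" and e: "e = vnorm (V *\<^sub>v x)"
      unfolding E_def dc by auto
    have xx: "x \<bullet> x = 1" using x(2) sq_nonneg_vec[of x] unfolding vnorm_def by simp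
    show "e \<le> sqrt (fsq d V)" unfolding e vnorm_def using frob_bound[OF V x(1)] xx by simp
  qed
  have bb: "bdd_below E" using lower unfolding bdd_below_def by blast
  have ba: "bdd_above E" using upper unfolding bdd_above_def by blast
  have "lb \<le> Inf E" using ne lower by (intro cInf_greatest) auto
  thus sp: "sigma_min V > 0" using lbp smin by simp
  obtain e0 where e0: "e0 \<in> E" using ne by auto
  have "Inf E \<le> e0" "e0 \<le> Sup E" using e0 bb ba by (auto intro: cInf_lower cSup_upper)
  thus "sigma_min V \<le> sigma_max V" using smin smax by simp
  have both: "\<And>y. y \<in> carrier_vec d \<Longrightarrow> y \<bullet> y \<noteq> 0 \<Longrightarrow>
     sigma_min V \<le> sqrt (((V *\<^sub>v y) \<bullet> (V *\<^sub>v y)) / (y \<bullet> y)) \<and>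
     sqrt (((V *\<^sub>v y) \<bullet> (V *\<^sub>v y)) / (y \<bullet> y)) \<le> sigma_max V"
  proof -
    fix y :: "real vec" assume y: "y \<in> carrier_vec d" and nz: "y \<bullet> y \<noteq> 0"
    define u where "u = (1 / sqrt (y \<bullet> y)) \<cdot>\<^sub>v y"
    note su = scale_unit[OF y nz, folded u_def]
    have "vnorm (V *\<^sub>v u) \<in> E" using Ein su by auto
    moreover have "vnorm (V *\<^sub>v u) = sqrt (((V *\<^sub>v y) \<bullet> (V *\<^sub>v y)) / (y \<bullet> y))"
      unfolding vnorm_def su(3)[OF V] ..
    ultimately show "sigma_min V \<le> sqrt (((V *\<^sub>v y) \<bullet> (V *\<^sub>v y)) / (y \<bullet> y)) \<and>
     sqrt (((V *\<^sub>v y) \<bullet> (V *\<^sub>v y)) / (y \<bullet> y)) \<le> sigma_max V"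
      using bb ba smin smax by (auto intro: cInf_lower cSup_upper)
  qed
  fix y :: "real vec" assume y: "y \<in> carrier_vec d"
  show "(sigma_min V)^2 * (y \<bullet> y) \<le> (V *\<^sub>v y) \<bullet> (V *\<^sub>v y)"
  proof (cases "y \<bullet> y = 0")
    case True thus ?thesis using sq_nonneg_vec[of "V *\<^sub>v y"] by simp
  next
    case False
    have p: "y \<bullet> y > 0" using False sq_nonneg_vec[of y] by simp
    have sm: "sigma_min V \<le> sqrt (((V *\<^sub>v y) \<bullet> (V *\<^sub>v y)) / (y \<bullet> y))" using both[OF y False] by simp
    hence "(sigma_min V)^2 \<le> ((V *\<^sub>v y) \<bullet> (V *\<^sub>v y)) / (y \<bullet> y)"
    proof -
      have q: "((V *\<^sub>v y) \<bullet> (V *\<^sub>v y)) / (y \<bullet> y) \<ge> 0" using p sq_nonneg_vec[of "V *\<^sub>v y"] by simp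
      have "(sigma_min V)^2 \<le> (sqrt (((V *\<^sub>v y) \<bullet> (V *\<^sub>v y)) / (y \<bullet> y)))^2"
        using sm sp by (intro power_mono) auto
      thus ?thesis using q by simp
    qed
    thus ?thesis using p by (simp add: field_simps)
  qed
  show "(V *\<^sub>v y) \<bullet> (V *\<^sub>v y) \<le> (sigma_max V)^2 * (y \<bullet> y)"
  proof (cases "y \<bullet> y = 0")
    case True
    thus ?thesis using frob_bound[OF V y] by simp
  next
    case False
    have p: "y \<bullet> y > 0" using False sq_nonneg_vec[of y] by simp
    have "sqrt (((V *\<^sub>v y) \<bullet> (V *\<^sub>v y)) / (y \<bullet> y)) \<le> sigma_max V" using both[OF y False] by simp
    hence "((V *\<^sub>v y) \<bullet> (V *\<^sub>v y)) / (y \<bullet> y) \<le> (sigma_max V)^2"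
      using sq_nonneg_vec[of "V *\<^sub>v y"] p by (metis divide_nonneg_pos real_sqrt_le_iff sqrt_le_D)
    thus ?thesis using p by (simp add: field_simps)
  qed
qed



lemma diag_mult_left: assumes Y: "Y \<in> carrier_mat d k" and i: "i < d" and j: "j < k"
  shows "(diag_of d f * Y) $$ (i,j) = f i * Y $$ (i,j)"
proof -
  have "(diag_of d f * Y) $$ (i,j) = (\<Sum>l\<in>{0..<d}. (if i = l then f i else 0) * Y $$ (l,j))"
    using Y i j unfolding diag_of_def by (auto simp: scalar_prod_def intro!: sum.cong)
  also have "\<dots> = (\<Sum>l\<in>{0..<d}. if l = i then f i * Y $$ (i,j) else 0)"
    by (intro sum.cong) auto
  also have "\<dots> = f i * Y $$ (i,j)" using i by (simp add: sum.delta)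
  finally show ?thesis .
qed

lemma diag_mult_right: assumes Y: "Y \<in> carrier_mat k d" and i: "i < k" and j: "j < d"
  shows "(Y * diag_of d f) $$ (i,j) = Y $$ (i,j) * f j"
proof -
  have "(Y * diag_of d f) $$ (i,j) = (\<Sum>l\<in>{0..<d}. Y $$ (i,l) * (if l = j then f j else 0))"
    using Y i j unfolding diag_of_def by (auto simp: scalar_prod_def intro!: sum.cong)
  also have "\<dots> = (\<Sum>l\<in>{0..<d}. if l = j then Y $$ (i,j) * f j else 0)"
    by (intro sum.cong) auto
  also have "\<dots> = Y $$ (i,j) * f j" using j by (simp add: sum.delta)
  finally show ?thesis .
qed

lemma diag_of_carrier[simp]: "diag_of d f \<in> carrier_mat d d" unfolding diag_of_def by simp

lemma diag_of_transpose[simp]: "transpose_mat (diag_of d f) = diag_of d f"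
  unfolding diag_of_def by (intro eq_matI) auto

lemma sum_single:
  fixes h :: "nat \<Rightarrow> real"
  assumes "a < d" "\<And>k. k < d \<Longrightarrow> k \<noteq> a \<Longrightarrow> h k = 0"
  shows "(\<Sum>k<d. h k) = h a"
proof -
  have "(\<Sum>k<d. h k) = (\<Sum>k<d. if k = a then h a else 0)"
    using assms by (intro sum.cong) auto
  also have "\<dots> = h a" using assms(1) by (simp add: sum.delta)
  finally show ?thesis .
qed

lemma tri_inv:
  fixes G L :: "nat \<Rightarrow> nat \<Rightarrow> real"
  assumes GL: "\<And>m a. m < d \<Longrightarrow> a < d \<Longrightarrow> (\<Sum>k<d. G m k * L k a) = (if m = a then 1 else 0)"
    and low: "\<And>k m. k < m \<Longrightarrow> m < d \<Longrightarrow> L k m = 0"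
    and dg: "\<And>m. m < d \<Longrightarrow> L m m \<noteq> 0"
  shows "m < a \<Longrightarrow> a < d \<Longrightarrow> G m a = 0"
proof (induction "d - a" arbitrary: a rule: less_induct)
  case less
  have "(\<Sum>k<d. G m k * L k a) = G m a * L a a"
  proof (rule sum_single)
    show "a < d" by fact
    fix k assume k: "k < d" "k \<noteq> a"
    show "G m k * L k a = 0"
    proof (cases "k < a")
      case True thus ?thesis using low[of k a] less.prems by simp
    next
      case False
      hence "a < k" using k by simp
      thus ?thesis using less.hyps[of k] less.prems k by simp
    qed
  qed
  moreover have "(\<Sum>k<d. G m k * L k a) = 0" using GL[of m a] less.prems by simp
  ultimately show ?case using dg[of a] less.prems by simp
qed

lemma diag_zero_core:
  fixes w wi lam :: "nat \<Rightarrow> nat \<Rightarrow> real" and bm :: "nat \<Rightarrow> nat \<Rightarrow> nat \<Rightarrow> real"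
  assumes inv: "\<And>i j. i < d \<Longrightarrow> j < d \<Longrightarrow> (\<Sum>k<d. wi i k * w k j) = (if i = j then 1 else 0)"
    and eig: "\<And>n p i. n \<in> S \<Longrightarrow> p < d \<Longrightarrow> i < d \<Longrightarrow> (\<Sum>k<d. bm n p k * w k i) = w p i * lam n i"
    and low: "\<And>n p k. n \<in> S \<Longrightarrow> p < k \<Longrightarrow> k < d \<Longrightarrow> bm n p k = 0"
    and sep: "\<And>i j. i < d \<Longrightarrow> j < d \<Longrightarrow> i \<noteq> j \<Longrightarrow> \<exists>n\<in>S. lam n i \<noteq> lam n j"
    and i: "i < d"
  shows "\<exists>f<d. (\<forall>k<f. w k i = 0) \<and> (\<forall>a. f < a \<longrightarrow> a < d \<longrightarrow> wi i a = 0)"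
proof -
  define F where "F j = (LEAST k. w k j \<noteq> 0)" for j
  have ex: "\<exists>k<d. w k j \<noteq> 0" if j: "j < d" for j
  proof (rule ccontr)
    assume "\<not> ?thesis"
    hence "(\<Sum>k<d. wi j k * w k j) = 0" by auto
    thus False using inv[OF j j] by simp
  qed
  have Fp: "F j < d \<and> w (F j) j \<noteq> 0 \<and> (\<forall>k<F j. w k j = 0)" if j: "j < d" for j
  proof -
    obtain k where k: "k < d" "w k j \<noteq> 0" using ex[OF j] by auto
    have "w (F j) j \<noteq> 0" unfolding F_def by (rule LeastI[of _ k]) (use k in auto)
    moreover have "F j \<le> k" unfolding F_def by (rule Least_le) (use k in auto)
    moreover have "\<forall>k<F j. w k j = 0" unfolding F_def using not_less_Least by blast
    ultimately show ?thesis using k by auto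
  qed
  have bl: "bm n (F j) (F j) = lam n j" if j: "j < d" and n: "n \<in> S" for j n
  proof -
    have "(\<Sum>k<d. bm n (F j) k * w k j) = bm n (F j) (F j) * w (F j) j"
    proof (rule sum_single)
      show "F j < d" using Fp[OF j] by auto
      fix k assume k: "k < d" "k \<noteq> F j"
      show "bm n (F j) k * w k j = 0"
      proof (cases "k < F j")
        case True thus ?thesis using Fp[OF j] by auto
      next
        case False thus ?thesis using low[OF n, of "F j" k] k by auto
      qed
    qed
    hence "bm n (F j) (F j) * w (F j) j = w (F j) j * lam n j" using eig[OF n, of "F j" j] Fp[OF j] j by simp
    thus ?thesis using Fp[OF j] by simp
  qed
  have injF: "inj_on F {..<d}"
  proof (rule inj_onI)
    fix a b assume a: "a \<in> {..<d}" and b: "b \<in> {..<d}" and e: "F a = F b"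
    show "a = b"
    proof (rule ccontr)
      assume "a \<noteq> b"
      then obtain n where n: "n \<in> S" "lam n a \<noteq> lam n b" using sep a b by auto
      thus False using bl[of a n] bl[of b n] a b e by auto
    qed
  qed
  have sub: "F ` {..<d} \<subseteq> {..<d}" using Fp by auto
  have img: "F ` {..<d} = {..<d}" using endo_inj_surj[OF _ sub injF] by simp
  define g where "g = the_inv_into {..<d} F"
  have gF: "g (F j) = j" if "j < d" for j unfolding g_def using the_inv_into_f_f[OF injF] that by auto
  have Fg: "F (g m) = m" if "m < d" for m unfolding g_def using f_the_inv_into_f[OF injF] img that by auto
  have gd: "g m < d" if "m < d" for m using img that Fp gF Fg
    by (metis imageE lessThan_iff)
  define Lm where "Lm k m = w k (g m)" for k m
  define Gm where "Gm m a = wi (g m) a" for m a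
  have tri: "Gm m a = 0" if "m < a" "a < d" for m a
  proof (rule tri_inv[of d Gm Lm])
    fix m a assume m: "m < d" and a: "a < d"
    have "(\<Sum>k<d. Gm m k * Lm k a) = (if g m = g a then 1 else 0)"
      unfolding Gm_def Lm_def using inv[of "g m" "g a"] gd m a by simp
    also have "\<dots> = (if m = a then 1 else 0)" using Fg m a by metis
    finally show "(\<Sum>k<d. Gm m k * Lm k a) = (if m = a then 1 else 0)" .
  next
    fix k m assume "k < m" "m < d"
    thus "Lm k m = 0" unfolding Lm_def using Fp[of "g m"] gd Fg by auto
  next
    fix m assume "m < d"
    thus "Lm m m \<noteq> 0" unfolding Lm_def using Fp[of "g m"] gd Fg by auto
  qed (use that in auto)
  show ?thesis
  proof (intro exI[of _ "F i"] conjI allI impI)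
    show "F i < d" using Fp[OF i] by auto
    fix k assume "k < F i" thus "w k i = 0" using Fp[OF i] by auto
  next
    fix a assume "F i < a" "a < d"
    hence "Gm (F i) a = 0" using tri by auto
    thus "wi i a = 0" unfolding Gm_def using gF[OF i] by simp
  qed
qed

lemma gamma_le:
  assumes "i < d" "j < d" "i \<noteq> j"
  shows "gamma_sep d N \<Lambda> \<le> (\<Sum>n=1..N. (\<Lambda> n i - \<Lambda> n j)^2)"
proof -
  let ?h = "\<lambda>(i::nat,i'::nat). (\<Sum>n=1..N. (\<Lambda> n i - \<Lambda> n i')^2)"
  have eq: "{(\<Sum>n=1..N. (\<Lambda> n i - \<Lambda> n i')^2) | i i'. i' < i \<and> i < d} = ?h ` {(i,i'). i' < i \<and> i < d}"
    by auto
  have fin: "finite {(i::nat,i'::nat). i' < i \<and> i < d}"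
    by (rule finite_subset[of _ "{..<d} \<times> {..<d}"]) auto
  have sym: "(\<Sum>n=1..N. (\<Lambda> n i - \<Lambda> n j)^2) = (\<Sum>n=1..N. (\<Lambda> n j - \<Lambda> n i)^2)"
    by (intro sum.cong) (auto simp: power2_commute)
  show ?thesis
  proof (cases "j < i")
    case True
    show ?thesis unfolding gamma_sep_def eq
      by (rule Min_le) (use fin True assms in auto)
  next
    case False
    hence "i < j" using assms by simp
    show ?thesis unfolding gamma_sep_def eq sym
      by (rule Min_le) (use fin \<open>i < j\<close> assms in auto)
  qed
qed



lemma cancel_l: fixes A B Z :: "real mat" assumes "A \<in> carrier_mat d d" "B \<in> carrier_mat d d" "A * B = 1\<^sub>m d" "Z \<in> carrier_mat d k"
  shows "A * (B * Z) = Z"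
proof -
  have "(A * B) * Z = A * (B * Z)" by (rule assoc_mult_mat) (use assms in auto)
  moreover have "(A * B) * Z = Z" unfolding assms(3) using assms(4) by (simp add: carrier_matD)
  ultimately show ?thesis by simp
qed

lemma core:
  fixes d N :: nat and V Vi U X :: "real mat" and \<Lambda> :: "nat \<Rightarrow> nat \<Rightarrow> real"
    and M :: "nat \<Rightarrow> real mat"
  assumes d1: "d \<ge> 1"
    and V: "V \<in> carrier_mat d d" and Vi: "Vi \<in> carrier_mat d d"
    and VVi: "V * Vi = 1\<^sub>m d" and ViV: "Vi * V = 1\<^sub>m d"
    and M: "\<And>n. n \<in> {1..N} \<Longrightarrow> M n = V * diag_of d (\<Lambda> n) * Vi"
    and gpos: "gamma_sep d N \<Lambda> > 0"
    and U: "U \<in> carrier_mat d d" and Uorth: "transpose_mat U * U = 1\<^sub>m d"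
    and Ulow: "\<And>n. n \<in> {1..N} \<Longrightarrow> low_part (transpose_mat U * M n * U) = 0\<^sub>m d d"
    and X: "X \<in> carrier_mat d d" and Xl: "\<And>a b. a < d \<Longrightarrow> b < d \<Longrightarrow> a \<le> b \<Longrightarrow> X $$ (a,b) = 0"
  shows "gamma_sep d N \<Lambda> * (sigma_min V / sigma_max V)^4 * fsq d X
    \<le> (\<Sum>n=1..N. fsq d (transpose_mat U * transpose_mat (M n) * U * X - X * (transpose_mat U * transpose_mat (M n) * U)))"
proof -
  define s where "s = sigma_min V"
  define S where "S = sigma_max V"
  define \<gamma> where "\<gamma> = gamma_sep d N \<Lambda>"
  note sf = sigma_facts[OF V Vi ViV d1, folded s_def S_def]
  have s0: "s > 0" and sS: "s \<le> S" using sf by auto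
  have S0: "S > 0" using s0 sS by simp
  note asd = assoc_mult_mat[of _ d d _ d _ d]
  note mc = mult_carrier_mat[of _ d d _ d]
  note tm = transpose_mult[of _ d d _ d]
  have Ut: "transpose_mat U \<in> carrier_mat d d" "transpose_mat V \<in> carrier_mat d d"
     "transpose_mat Vi \<in> carrier_mat d d" using U V Vi by auto
  have UUt: "U * transpose_mat U = 1\<^sub>m d" by (rule mat_mult_left_right_inverse[OF Ut(1) U Uorth])
  define W where "W = transpose_mat U * transpose_mat Vi"
  define Wi where "Wi = transpose_mat V * U"
  define D where "D n = diag_of d (\<Lambda> n)" for n
  define B where "B n = transpose_mat U * transpose_mat (M n) * U" for n
  have W: "W \<in> carrier_mat d d" and Wi: "Wi \<in> carrier_mat d d" unfolding W_def Wi_def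
    using Ut U by (auto intro: mc)
  have Dc: "D n \<in> carrier_mat d d" for n unfolding D_def by simp
  have D1: "D n * 1\<^sub>m d = D n" for n using Dc[of n] by (simp add: carrier_matD)
  have tVV: "transpose_mat Vi * transpose_mat V = 1\<^sub>m d" using tm[OF V Vi] VVi by simp
  have tVV2: "transpose_mat V * transpose_mat Vi = 1\<^sub>m d" using tm[OF Vi V] ViV by simp
  have WWi: "W * Wi = 1\<^sub>m d"
  proof -
    have "W * Wi = transpose_mat U * ((transpose_mat Vi * transpose_mat V) * U)"
      unfolding W_def Wi_def using U Ut by (simp add: asd mc)
    thus ?thesis using tVV Uorth U by simp
  qed
  have WiW: "Wi * W = 1\<^sub>m d"
  proof -
    have "Wi * W = transpose_mat V * ((U * transpose_mat U) * transpose_mat Vi)"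
      unfolding W_def Wi_def using U Ut by (simp add: asd mc)
    thus ?thesis using tVV2 UUt Ut by simp
  qed
  have cW: "W * (Wi * Z) = Z" "Wi * (W * Z) = Z" if "Z \<in> carrier_mat d d" for Z
    using cancel_l[OF W Wi WWi that] cancel_l[OF Wi W WiW that] by auto
  have Bn: "B n = W * (D n * Wi)" if n: "n \<in> {1..N}" for n
  proof -
    have "transpose_mat (M n) = transpose_mat Vi * (D n * transpose_mat V)"
      unfolding M[OF n] D_def using V Vi by (simp add: tm mc asd)
    thus ?thesis unfolding B_def W_def Wi_def using U Ut Dc by (simp add: asd mc)
  qed
  have Bc: "B n \<in> carrier_mat d d" if n: "n \<in> {1..N}" for n unfolding B_def M[OF n] using U Ut V Vi by (auto intro!: mc)
  define Y where "Y = Wi * (X * W)"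
  have Yc: "Y \<in> carrier_mat d d" unfolding Y_def using Wi X W by (auto intro!: mc)
  have XY: "X = W * (Y * Wi)"
  proof -
    have "W * (Y * Wi) = W * (Wi * (X * (W * Wi)))" unfolding Y_def using W Wi X by (simp add: asd mc)
    also have "\<dots> = X" using WWi cW X by simp
    finally show ?thesis by simp
  qed
  define R where "R n = B n * X - X * B n" for n
  define Z where "Z n = D n * Y - Y * D n" for n
  have Rc: "R n \<in> carrier_mat d d" if n: "n \<in> {1..N}" for n unfolding R_def using Bc[OF n] X by (auto intro!: mc minus_carrier_mat)
  have ZR: "Z n = Wi * (R n * W)" if n: "n \<in> {1..N}" for n
  proof -
    have "Wi * (R n * W) = Wi * (B n * (X * W)) - Wi * (X * (B n * W))"
      unfolding R_def using Bc[OF n] X W Wi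
      by (simp add: minus_mult_distrib_mat[of _ d d _ _ d] mult_minus_distrib_mat[of _ d d _ d] mc asd)
    also have "\<dots> = D n * Y - Y * D n"
      unfolding Bn[OF n] Y_def using W Wi X Dc cW WiW
      by (simp add: asd mc D1)
    finally show ?thesis unfolding Z_def by simp
  qed
  have opV: "opb d V (S^2)" unfolding opb_def using sf(4) by auto
  have opVt: "opb d (transpose_mat V) (S^2)" by (rule opb_transpose[OF V opV]) simp
  have opVi: "opb d Vi (1 / s^2)" unfolding opb_def
  proof
    fix y :: "real vec" assume y: "y \<in> carrier_vec d"
    have "s^2 * ((Vi *\<^sub>v y) \<bullet> (Vi *\<^sub>v y)) \<le> (V *\<^sub>v (Vi *\<^sub>v y)) \<bullet> (V *\<^sub>v (Vi *\<^sub>v y))"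
      using sf(3)[of "Vi *\<^sub>v y"] Vi y by simp
    also have "V *\<^sub>v (Vi *\<^sub>v y) = y" using assoc_mult_mat_vec[OF V Vi y] VVi y by simp
    finally show "(Vi *\<^sub>v y) \<bullet> (Vi *\<^sub>v y) \<le> 1 / s^2 * (y \<bullet> y)" using s0 by (simp add: field_simps)
  qed
  have opVit: "opb d (transpose_mat Vi) (1 / s^2)" by (rule opb_transpose[OF Vi opVi]) simp
  have orth: "opb d G 1" if G: "G \<in> carrier_mat d d" and GG: "transpose_mat G * G = 1\<^sub>m d" for G
    unfolding opb_def
  proof
    fix y :: "real vec" assume y: "y \<in> carrier_vec d"
    have "(G *\<^sub>v y) \<bullet> (G *\<^sub>v y) = (transpose_mat G *\<^sub>v (G *\<^sub>v y)) \<bullet> y"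
      using transpose_vec_mult_scalar[OF G y, of "G *\<^sub>v y"] G y by simp
    also have "transpose_mat G *\<^sub>v (G *\<^sub>v y) = y"
      using assoc_mult_mat_vec[of "transpose_mat G" d d G d y] G y GG by simp
    finally show "(G *\<^sub>v y) \<bullet> (G *\<^sub>v y) \<le> 1 * (y \<bullet> y)" by simp
  qed
  have opU: "opb d U 1" by (rule orth[OF U Uorth])
  have opUt: "opb d (transpose_mat U) 1" by (rule orth) (use Ut UUt in auto)
  have opW: "opb d W (1 / s^2)" unfolding W_def using opb_comp[OF Ut(1) Ut(3) opUt opVit] by simp
  have opWt: "opb d (transpose_mat W) (1 / s^2)"
  proof -
    have "transpose_mat W = Vi * U" unfolding W_def using tm[OF Ut(1) Ut(3)] by simp
    thus ?thesis using opb_comp[OF Vi U opVi opU] s0 by simp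
  qed
  have opWi: "opb d Wi (S^2)" unfolding Wi_def using opb_comp[OF Ut(2) U opVt opU] by simp
  have opWit: "opb d (transpose_mat Wi) (S^2)"
  proof -
    have "transpose_mat Wi = transpose_mat U * V" unfolding Wi_def using tm[OF Ut(2) U] by simp
    thus ?thesis using opb_comp[OF Ut(1) V opUt opV] by simp
  qed
  have XYb: "fsq d X \<le> (S^2 / s^2) * fsq d Y"
  proof -
    have "fsq d X \<le> 1 / s^2 * fsq d (Y * Wi)" unfolding XY
      by (rule opb_left[OF W _ opW]) (use Yc Wi in \<open>auto intro: mc\<close>)
    also have "\<dots> \<le> 1 / s^2 * (S^2 * fsq d Y)"
      by (intro mult_left_mono opb_right[OF Wi Yc opWit]) auto
    finally show ?thesis by simp
  qed
  have ZRb: "fsq d (Z n) \<le> (S^2 / s^2) * fsq d (R n)" if n: "n \<in> {1..N}" for n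
  proof -
    have "fsq d (Z n) \<le> S^2 * fsq d (R n * W)" unfolding ZR[OF n]
      by (rule opb_left[OF Wi _ opWi]) (use Rc[OF n] W in \<open>auto intro: mc\<close>)
    also have "\<dots> \<le> S^2 * (1 / s^2 * fsq d (R n))"
      by (intro mult_left_mono opb_right[OF W Rc[OF n] opWt]) auto
    finally show ?thesis by simp
  qed
  have Alow: "B n $$ (p,k) = 0" if n: "n \<in> {1..N}" and pk: "p < k" "k < d" for n p k
  proof -
    define A where "A = transpose_mat U * M n * U"
    have Ac: "A \<in> carrier_mat d d" unfolding A_def M[OF n] using U Ut V Vi by (auto intro!: mc)
    have "B n = transpose_mat A" unfolding A_def B_def M[OF n] using U Ut V Vi
      by (simp add: tm mc asd)
    hence "B n $$ (p,k) = A $$ (k,p)" using Ac pk by simp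
    also have "A $$ (k,p) = low_part A $$ (k,p)" unfolding low_part_def using Ac pk by simp
    also have "\<dots> = 0" using Ulow[OF n] pk unfolding A_def[symmetric] by simp
    finally show ?thesis .
  qed
  have sep: "\<exists>n\<in>{1..N}. \<Lambda> n i \<noteq> \<Lambda> n j" if "i < d" "j < d" "i \<noteq> j" for i j
  proof (rule ccontr)
    assume "\<not> ?thesis"
    hence "(\<Sum>n=1..N. (\<Lambda> n i - \<Lambda> n j)^2) = 0" by auto
    thus False using gamma_le[OF that, of N \<Lambda>] gpos by simp
  qed
  have Ydiag: "Y $$ (i,i) = 0" if i: "i < d" for i
  proof -
    have ex: "\<exists>f<d. (\<forall>k<f. W $$ (k,i) = 0) \<and> (\<forall>a. f < a \<longrightarrow> a < d \<longrightarrow> Wi $$ (i,a) = 0)"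
    proof (rule diag_zero_core[where bm = "\<lambda>n p k. B n $$ (p,k)" and lam = \<Lambda> and S = "{1..N}"])
      fix i j assume "i < d" "j < d"
      hence "(Wi * W) $$ (i,j) = (\<Sum>k<d. Wi $$ (i,k) * W $$ (k,j))"
        using W Wi by (simp add: scalar_prod_def lessThan_atLeast0)
      thus "(\<Sum>k<d. Wi $$ (i,k) * W $$ (k,j)) = (if i = j then 1 else 0)"
        unfolding WiW using \<open>i < d\<close> \<open>j < d\<close> by simp
    next
      fix n p i assume n: "n \<in> {1..N}" and p: "p < d" and i: "i < d"
      have "B n * W = W * D n" unfolding Bn[OF n] using W Wi Dc WiW
        by (simp add: asd mc D1)
      hence "(B n * W) $$ (p,i) = W $$ (p,i) * \<Lambda> n i"
        using diag_mult_right[OF W p i, of "\<Lambda> n"] unfolding D_def by simp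
      thus "(\<Sum>k<d. B n $$ (p,k) * W $$ (k,i)) = W $$ (p,i) * \<Lambda> n i"
        using Bc[OF n] W p i by (simp add: scalar_prod_def lessThan_atLeast0)
    next
      fix n p k assume "n \<in> {1..N}" "p < k" "k < d"
      thus "B n $$ (p,k) = 0" by (rule Alow)
    next
      fix i j assume "i < d" "j < d" "i \<noteq> j"
      thus "\<exists>n\<in>{1..N}. \<Lambda> n i \<noteq> \<Lambda> n j" by (rule sep)
    qed (rule i)
    then obtain f where f: "f < d" "\<And>k. k < f \<Longrightarrow> W $$ (k,i) = 0"
      "\<And>a. f < a \<Longrightarrow> a < d \<Longrightarrow> Wi $$ (i,a) = 0" by blast
    have "Y $$ (i,i) = (\<Sum>a<d. Wi $$ (i,a) * (\<Sum>b<d. X $$ (a,b) * W $$ (b,i)))"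
      unfolding Y_def using Wi X W i by (simp add: scalar_prod_def lessThan_atLeast0 mc)
    also have "\<dots> = 0"
    proof (intro sum.neutral ballI)
      fix a assume a: "a \<in> {..<d}"
      show "Wi $$ (i,a) * (\<Sum>b<d. X $$ (a,b) * W $$ (b,i)) = 0"
      proof (cases "f < a")
        case True thus ?thesis using f(3) a by simp
      next
        case False
        have "(\<Sum>b<d. X $$ (a,b) * W $$ (b,i)) = 0"
        proof (intro sum.neutral ballI)
          fix b assume b: "b \<in> {..<d}"
          show "X $$ (a,b) * W $$ (b,i) = 0"
          proof (cases "b < f")
            case True thus ?thesis using f(2) by simp
          next
            case False thus ?thesis using Xl[of a b] a b \<open>\<not> f < a\<close> by simp
          qed
        qed
        thus ?thesis by simp
      qed
    qed
    finally show ?thesis .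
  qed
  have Zij: "Z n $$ (i,j) = (\<Lambda> n i - \<Lambda> n j) * Y $$ (i,j)" if "i < d" "j < d" for n i j
  proof -
    have "Z n $$ (i,j) = (D n * Y) $$ (i,j) - (Y * D n) $$ (i,j)"
      unfolding Z_def using that Yc Dc[of n] by (subst index_minus_mat) auto
    thus ?thesis unfolding D_def using diag_mult_left[OF Yc that] diag_mult_right[OF Yc that]
      by (simp add: algebra_simps)
  qed
  have Zent: "fsq d (Z n) = (\<Sum>i<d. \<Sum>j<d. (\<Lambda> n i - \<Lambda> n j)^2 * (Y $$ (i,j))^2)" for n
    unfolding fsq_def
    by (intro sum.cong refl) (simp add: Zij power_mult_distrib)
  have "(\<Sum>n=1..N. fsq d (Z n)) = (\<Sum>i<d. \<Sum>j<d. (\<Sum>n=1..N. (\<Lambda> n i - \<Lambda> n j)^2) * (Y $$ (i,j))^2)"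
  proof -
    have "(\<Sum>n=1..N. fsq d (Z n)) = (\<Sum>n=1..N. \<Sum>i<d. \<Sum>j<d. (\<Lambda> n i - \<Lambda> n j)^2 * (Y $$ (i,j))^2)"
      unfolding Zent ..
    also have "\<dots> = (\<Sum>i<d. \<Sum>n=1..N. \<Sum>j<d. (\<Lambda> n i - \<Lambda> n j)^2 * (Y $$ (i,j))^2)"
      by (rule sum.swap)
    also have "\<dots> = (\<Sum>i<d. \<Sum>j<d. \<Sum>n=1..N. (\<Lambda> n i - \<Lambda> n j)^2 * (Y $$ (i,j))^2)"
      by (intro sum.cong refl sum.swap)
    finally show ?thesis by (simp add: sum_distrib_right)
  qed
  also have "\<dots> \<ge> (\<Sum>i<d. \<Sum>j<d. \<gamma> * (Y $$ (i,j))^2)"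
  proof (intro sum_mono)
    fix i j assume i: "i \<in> {..<d}" and j: "j \<in> {..<d}"
    show "\<gamma> * (Y $$ (i,j))^2 \<le> (\<Sum>n=1..N. (\<Lambda> n i - \<Lambda> n j)^2) * (Y $$ (i,j))^2"
    proof (cases "i = j")
      case True thus ?thesis using Ydiag i by simp
    next
      case False thus ?thesis using gamma_le[of i d j N \<Lambda>] i j unfolding \<gamma>_def
        by (intro mult_right_mono) auto
    qed
  qed
  finally have Zsum: "\<gamma> * fsq d Y \<le> (\<Sum>n=1..N. fsq d (Z n))" unfolding fsq_def by (simp add: sum_distrib_left)
  have "\<gamma> * (s/S)^4 * fsq d X \<le> \<gamma> * (s/S)^4 * ((S^2 / s^2) * fsq d Y)"
    using XYb gpos unfolding \<gamma>_def by (intro mult_left_mono) auto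
  also have "\<dots> = (s^2/S^2) * (\<gamma> * fsq d Y)" using s0 S0 by (simp add: field_simps power2_eq_square power4_eq_xxxx)
  also have "\<dots> \<le> (s^2/S^2) * (\<Sum>n=1..N. fsq d (Z n))" using Zsum by (intro mult_left_mono) auto
  also have "\<dots> \<le> (s^2/S^2) * (\<Sum>n=1..N. (S^2 / s^2) * fsq d (R n))"
    by (intro mult_left_mono sum_mono ZRb) auto
  also have "\<dots> = (\<Sum>n=1..N. fsq d (R n))" using s0 S0 by (simp add: sum_distrib_left)
  finally show ?thesis unfolding \<gamma>_def s_def S_def R_def B_def .
qed



lemma divmod_lin: assumes "a < (d::nat)" shows "(a + b*d) div d = b" "(a + b*d) mod d = a"
  using assms by auto

lemma grid_sum: fixes g :: "nat \<Rightarrow> 'a::comm_monoid_add"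
  shows "(\<Sum>q<d*d. g q) = (\<Sum>b<d. \<Sum>a<d. g (a + b*d))"
proof -
  have "(\<Sum>q<d*d. g q) = (\<Sum>b<d. sum g {b*d..<b*d+d})" by (rule sum.nat_group[symmetric])
  also have "\<dots> = (\<Sum>b<d. \<Sum>a<d. g (a + b*d))"
  proof (rule sum.cong[OF refl])
    fix b
    have "sum g {b*d..<b*d+d} = sum g {0 + b*d..<d + b*d}" by (simp add: add.commute)
    also have "\<dots> = (\<Sum>a=0..<d. g (a + b*d))" by (rule sum.shift_bounds_nat_ivl)
    finally show "sum g {b*d..<b*d+d} = (\<Sum>a<d. g (a + b*d))" by (simp add: lessThan_atLeast0)
  qed
  finally show ?thesis .
qed

lemma set_lowpos: "set (low_positions d) = {q. q < d*d \<and> q div d < q mod d}"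
  unfolding low_positions_def by auto

lemma distinct_lowpos: "distinct (low_positions d)"
  unfolding low_positions_def by simp

lemma lowpos_sum: fixes h :: "nat \<Rightarrow> 'a::comm_monoid_add"
  shows "(\<Sum>s<length (low_positions d). h (low_positions d ! s)) = (\<Sum>b<d. \<Sum>a<d. if b < a then h (a + b*d) else 0)"
proof -
  let ?p = "low_positions d"
  have "(\<Sum>s<length ?p. h (?p ! s)) = sum_list (map h ?p)"
    by (simp add: sum_list_sum_nth lessThan_atLeast0)
  also have "\<dots> = sum h (set ?p)" using distinct_lowpos by (rule sum_list_distinct_conv_sum_set)
  also have "\<dots> = (\<Sum>q<d*d. if q div d < q mod d then h q else 0)"
    unfolding set_lowpos by (simp add: sum.If_cases Collect_conj_eq lessThan_def Int_commute)
  also have "\<dots> = (\<Sum>b<d. \<Sum>a<d. if b < a then h (a + b*d) else 0)"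
    by (subst grid_sum) (intro sum.cong refl, simp)
  finally show ?thesis .
qed

lemma length_lowpos: "length (low_positions d) = d * (d - 1) div 2"
proof -
  have "length (low_positions d) = (\<Sum>s<length (low_positions d). (\<lambda>_. 1::nat) (low_positions d ! s))" by simp
  also have "\<dots> = (\<Sum>b<d. \<Sum>a<d. if b < a then 1 else 0)" by (rule lowpos_sum)
  also have "\<dots> = (\<Sum>a<d. \<Sum>b<d. if b < a then 1 else 0)" by (rule sum.swap)
  also have "\<dots> = (\<Sum>a<d. a)"
  proof (rule sum.cong[OF refl])
    fix a assume a: "a \<in> {..<d}"
    have "(\<Sum>b<d. if b < a then 1 else (0::nat)) = card ({..<d} \<inter> {b. b < a})"
      by (simp add: sum.If_cases)
    also have "{..<d} \<inter> {b. b < a} = {..<a}" using a by auto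
    finally show "(\<Sum>b<d. if b < a then 1 else (0::nat)) = a" by simp
  qed
  also have "\<dots> = d * (d - 1) div 2"
  proof (cases d)
    case 0 thus ?thesis by simp
  next
    case (Suc m)
    have "(\<Sum>a<d. a) = \<Sum>{0..m}" unfolding Suc by (simp add: lessThan_Suc_atMost atMost_atLeast0)
    also have "\<dots> = m * Suc m div 2" by (rule gauss_sum_nat)
    finally show ?thesis unfolding Suc by (simp add: mult.commute)
  qed
  finally show ?thesis .
qed



definition idxl :: "nat \<Rightarrow> nat \<Rightarrow> nat" where
  "idxl d = the_inv_into {..<length (low_positions d)} (\<lambda>s. low_positions d ! s)"

definition Xof :: "nat \<Rightarrow> real vec \<Rightarrow> real mat" where
  "Xof d x = mat d d (\<lambda>(i,j). if j < i then x $ (idxl d (i + j*d)) else 0)"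

lemma inj_lowpos: "inj_on (\<lambda>s. low_positions d ! s) {..<length (low_positions d)}"
  using distinct_lowpos by (auto simp: inj_on_def nth_eq_iff_index_eq)

lemma idxl_pos: "s < length (low_positions d) \<Longrightarrow> idxl d (low_positions d ! s) = s"
  unfolding idxl_def using the_inv_into_f_f[OF inj_lowpos] by auto

lemma lowpos_props: assumes "s < length (low_positions d)"
  shows "low_positions d ! s < d*d" "low_positions d ! s div d < low_positions d ! s mod d"
  using nth_mem[OF assms] unfolding set_lowpos by auto

lemma Xof_carrier: "Xof d x \<in> carrier_mat d d" unfolding Xof_def by simp

lemma Xof_low: "a < d \<Longrightarrow> b < d \<Longrightarrow> a \<le> b \<Longrightarrow> Xof d x $$ (a,b) = 0"
  unfolding Xof_def by simp

lemma Xof_pos: assumes s: "s < length (low_positions d)"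
  shows "Xof d x $$ (low_positions d ! s mod d, low_positions d ! s div d) = x $ s"
proof -
  let ?p = "low_positions d ! s"
  have dpos: "d > 0" using lowpos_props(1)[OF s] by (cases d) auto
  have lt: "?p mod d < d" "?p div d < d" using lowpos_props(1)[OF s] dpos
    by (auto simp: less_mult_imp_div_less)
  have "?p mod d + ?p div d * d = ?p" by simp
  thus ?thesis unfolding Xof_def using lt lowpos_props(2)[OF s] idxl_pos[OF s] by simp
qed

lemma Plow_carrier: "P_low d \<in> carrier_mat (length (low_positions d)) (d*d)"
  unfolding P_low_def by simp

lemma Plow_vec: assumes y: "y \<in> carrier_vec (d*d)" and r: "r < length (low_positions d)"
  shows "(P_low d *\<^sub>v y) $ r = y $ (low_positions d ! r)"
proof -
  have "(P_low d *\<^sub>v y) $ r = (\<Sum>k<d*d. (if low_positions d ! r = k then 1 else 0) * y $ k)"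
    using y r unfolding P_low_def by (simp add: scalar_prod_def lessThan_atLeast0)
  also have "\<dots> = (if low_positions d ! r = low_positions d ! r then 1 else 0) * y $ (low_positions d ! r)"
    by (rule sum_single) (use lowpos_props(1)[OF r] in auto)
  finally show ?thesis by simp
qed

lemma PlowT_vec: assumes x: "x \<in> carrier_vec (length (low_positions d))" and q: "q < d*d"
  shows "(transpose_mat (P_low d) *\<^sub>v x) $ q = Xof d x $$ (q mod d, q div d)"
proof -
  let ?K = "length (low_positions d)"
  have dpos: "d > 0" using q by (cases d) auto
  have lt: "q mod d < d" "q div d < d" using q dpos by (auto simp: less_mult_imp_div_less)
  have "(transpose_mat (P_low d) *\<^sub>v x) $ q = (\<Sum>r<?K. (if low_positions d ! r = q then 1 else 0) * x $ r)"
    using x q unfolding P_low_def by (simp add: scalar_prod_def lessThan_atLeast0)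
  also have "\<dots> = Xof d x $$ (q mod d, q div d)"
  proof (cases "q div d < q mod d")
    case True
    hence qin: "q \<in> set (low_positions d)" unfolding set_lowpos using q by auto
    then obtain s where s: "s < ?K" "low_positions d ! s = q" by (auto simp: in_set_conv_nth)
    have "(\<Sum>r<?K. (if low_positions d ! r = q then 1 else 0) * x $ r)
        = (if low_positions d ! s = q then 1 else 0) * x $ s"
    proof (rule sum_single)
      show "s < ?K" by fact
      fix k assume "k < ?K" "k \<noteq> s"
      thus "(if low_positions d ! k = q then 1 else 0) * x $ k = 0"
        using s inj_lowpos[of d] unfolding inj_on_def by auto
    qed
    also have "\<dots> = Xof d x $$ (q mod d, q div d)" using Xof_pos[OF s(1), of x] s by simp
    finally show ?thesis .
  next
    case False
    hence "\<forall>r<?K. low_positions d ! r \<noteq> q" using lowpos_props(2) by metis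
    thus ?thesis unfolding Xof_def using lt False by simp
  qed
  finally show ?thesis .
qed

lemma fsq_lower: assumes H: "\<And>a b. a < d \<Longrightarrow> b < d \<Longrightarrow> a \<le> b \<Longrightarrow> H $$ (a,b) = 0"
  shows "(\<Sum>b<d. \<Sum>a<d. if b < a then (H $$ (a,b))^2 else 0) = fsq d H"
proof -
  have "(\<Sum>b<d. \<Sum>a<d. if b < a then (H $$ (a,b))^2 else 0) = (\<Sum>b<d. \<Sum>a<d. (H $$ (a,b))^2)"
    using H by (intro sum.cong refl) auto
  also have "\<dots> = fsq d H" unfolding fsq_def by (rule sum.swap)
  finally show ?thesis .
qed

lemma xx_fsq: assumes x: "x \<in> carrier_vec (length (low_positions d))"
  shows "x \<bullet> x = fsq d (Xof d x)"
proof -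
  let ?K = "length (low_positions d)"
  have "x \<bullet> x = (\<Sum>s<?K. (Xof d x $$ (low_positions d ! s mod d, low_positions d ! s div d))^2)"
    using x Xof_pos by (simp add: scalar_prod_def lessThan_atLeast0 power2_eq_square)
  also have "\<dots> = (\<Sum>b<d. \<Sum>a<d. if b < a then (Xof d x $$ (a,b))^2 else 0)"
    by (subst lowpos_sum) (intro sum.cong refl, auto simp: divmod_lin)
  also have "\<dots> = fsq d (Xof d x)" by (rule fsq_lower) (rule Xof_low)
  finally show ?thesis .
qed



lemma lin_lt: assumes "i < d" "j < (d::nat)" shows "i + j*d < d*d"
proof -
  have "Suc j * d \<le> d * d" using assms(2) by (intro mult_le_mono1) simp
  thus ?thesis using assms(1) by simp
qed

lemma kron_idx: assumes "i < d" "j < d" "a < d" "b < d" "A \<in> carrier_mat d d" "B \<in> carrier_mat d d"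
  shows "kron A B $$ (i + j*d, a + b*d) = A $$ (j, b) * B $$ (i, a)"
  unfolding kron_def using assms lin_lt[of i d j] lin_lt[of a d b] by (simp add: divmod_lin)

lemma tquad:
  fixes U Mm :: "real mat" and x :: "real vec"
  assumes U: "U \<in> carrier_mat d d" and Mm: "Mm \<in> carrier_mat d d"
    and lowB: "\<And>p k. p < k \<Longrightarrow> k < d \<Longrightarrow> (transpose_mat U * transpose_mat Mm * U) $$ (p,k) = 0"
    and x: "x \<in> carrier_vec (length (low_positions d))"
  shows "t_mat d U Mm \<in> carrier_mat (length (low_positions d)) (length (low_positions d))"
    "(t_mat d U Mm *\<^sub>v x) \<bullet> (t_mat d U Mm *\<^sub>v x)
       = fsq d ((transpose_mat U * transpose_mat Mm * U) * Xof d x - Xof d x * (transpose_mat U * transpose_mat Mm * U))"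
proof -
  define K where "K = length (low_positions d)"
  define B where "B = transpose_mat U * transpose_mat Mm * U"
  define A where "A = transpose_mat U * Mm * U"
  define X where "X = Xof d x"
  define P where "P = P_low d"
  define Cm where "Cm = kron (1\<^sub>m d) B - kron A (1\<^sub>m d)"
  note mc = mult_carrier_mat[of _ d d _ d]
  have Bc: "B \<in> carrier_mat d d" and Ac: "A \<in> carrier_mat d d" unfolding A_def B_def using U Mm
    by (auto intro!: mc)
  have Xc: "X \<in> carrier_mat d d" unfolding X_def by (rule Xof_carrier)
  have Pc: "P \<in> carrier_mat K (d*d)" unfolding P_def K_def by (rule Plow_carrier)
  have Cc: "Cm \<in> carrier_mat (d*d) (d*d)" unfolding Cm_def kron_def
    using Ac by (intro minus_carrier_mat) auto
  have BA: "B $$ (b,j) = A $$ (j,b)" if "b < d" "j < d" for b j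
  proof -
    have "transpose_mat A = B" unfolding A_def B_def using U Mm
      by (simp add: transpose_mult[of _ d d _ d] mc)
    thus ?thesis using that Ac by auto
  qed
  have t: "t_mat d U Mm = P * Cm * transpose_mat P"
    unfolding t_mat_def P_def Cm_def B_def A_def ..
  show tc: "t_mat d U Mm \<in> carrier_mat (length (low_positions d)) (length (low_positions d))"
    unfolding t K_def[symmetric] using Pc Cc by (auto intro!: mult_carrier_mat)
  define z where "z = transpose_mat P *\<^sub>v x"
  have zc: "z \<in> carrier_vec (d*d)" unfolding z_def using Pc x K_def by auto
  have z: "z $ q = X $$ (q mod d, q div d)" if "q < d*d" for q
    unfolding z_def P_def X_def using PlowT_vec[OF x that] .
  have tx: "t_mat d U Mm *\<^sub>v x = P *\<^sub>v (Cm *\<^sub>v z)"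
    unfolding t z_def using Pc Cc x K_def
    by (simp add: assoc_mult_mat_vec[of _ K "d*d" _ K] assoc_mult_mat_vec[of _ K "d*d" _ "d*d"])
  have txr: "(t_mat d U Mm *\<^sub>v x) $ r = (Cm *\<^sub>v z) $ (low_positions d ! r)" if "r < K" for r
    unfolding tx P_def using Plow_vec[of "Cm *\<^sub>v z" d r] Cc zc that K_def by auto
  have Cz: "(Cm *\<^sub>v z) $ (i + j*d) = (B * X - X * B) $$ (i,j)" if ij: "i < d" "j < d" for i j
  proof -
    have p: "i + j*d < d*d" using lin_lt ij by auto
    have "(Cm *\<^sub>v z) $ (i + j*d) = (\<Sum>q<d*d. Cm $$ (i + j*d, q) * z $ q)"
      using Cc zc p by (simp add: scalar_prod_def lessThan_atLeast0)
    also have "\<dots> = (\<Sum>b<d. \<Sum>a<d. Cm $$ (i + j*d, a + b*d) * z $ (a + b*d))" by (rule grid_sum)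
    also have "\<dots> = (\<Sum>b<d. \<Sum>a<d. ((if j = b then 1 else 0) * B $$ (i,a) - A $$ (j,b) * (if i = a then 1 else 0)) * X $$ (a,b))"
    proof (intro sum.cong refl)
      fix a b assume a: "a \<in> {..<d}" and b: "b \<in> {..<d}"
      have q: "a + b*d < d*d" using lin_lt a b by auto
      have "Cm $$ (i + j*d, a + b*d) = kron (1\<^sub>m d) B $$ (i + j*d, a + b*d) - kron A (1\<^sub>m d) $$ (i + j*d, a + b*d)"
        unfolding Cm_def using p q Ac by (subst index_minus_mat) (auto simp: kron_def)
      also have "\<dots> = (if j = b then 1 else 0) * B $$ (i,a) - A $$ (j,b) * (if i = a then 1 else 0)"
        using kron_idx[OF ij a[simplified] b[simplified], of "1\<^sub>m d" B] kron_idx[OF ij a[simplified] b[simplified], of A "1\<^sub>m d"]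
          Bc Ac ij a b by simp
      finally show "Cm $$ (i + j*d, a + b*d) * z $ (a + b*d)
          = ((if j = b then 1 else 0) * B $$ (i,a) - A $$ (j,b) * (if i = a then 1 else 0)) * X $$ (a,b)"
        using z[OF q] a b by (simp add: divmod_lin)
    qed
    also have "\<dots> = (\<Sum>b<d. \<Sum>a<d. (if j = b then B $$ (i,a) * X $$ (a,b) else 0))
                   - (\<Sum>b<d. \<Sum>a<d. (if i = a then A $$ (j,b) * X $$ (a,b) else 0))"
    proof -
      have e: "((if j = b then 1 else 0) * B $$ (i,a) - A $$ (j,b) * (if i = a then 1 else 0)) * X $$ (a,b)
          = (if j = b then B $$ (i,a) * X $$ (a,b) else 0) - (if i = a then A $$ (j,b) * X $$ (a,b) else 0)" for a b
        by (auto simp: algebra_simps)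
      show ?thesis unfolding e by (simp add: sum_subtractf)
    qed
    also have "\<dots> = (\<Sum>a<d. B $$ (i,a) * X $$ (a,j)) - (\<Sum>b<d. A $$ (j,b) * X $$ (i,b))"
      using ij by (simp add: sum.delta' sum.swap[of _ "{..<d}" "{..<d}"])
    also have "\<dots> = (B * X - X * B) $$ (i,j)"
      using ij Bc Xc BA by (simp add: scalar_prod_def lessThan_atLeast0 mc mult.commute)
    finally show ?thesis .
  qed
  have Rl: "(B * X - X * B) $$ (a,b) = 0" if "a < d" "b < d" "a \<le> b" for a b
  proof -
    have "(B * X) $$ (a,b) = (\<Sum>k<d. B $$ (a,k) * X $$ (k,b))"
      using that Bc Xc by (simp add: scalar_prod_def lessThan_atLeast0)
    also have "\<dots> = 0"
    proof (intro sum.neutral ballI)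
      fix k assume k: "k \<in> {..<d}"
      show "B $$ (a,k) * X $$ (k,b) = 0"
      proof (cases "a < k")
        case True thus ?thesis using lowB[of a k] k unfolding B_def by simp
      next
        case False thus ?thesis using Xof_low[of k d b x] k that unfolding X_def by simp
      qed
    qed
    finally have 1: "(B * X) $$ (a,b) = 0" .
    have "(X * B) $$ (a,b) = (\<Sum>k<d. X $$ (a,k) * B $$ (k,b))"
      using that Bc Xc by (simp add: scalar_prod_def lessThan_atLeast0)
    also have "\<dots> = 0"
    proof (intro sum.neutral ballI)
      fix k assume k: "k \<in> {..<d}"
      show "X $$ (a,k) * B $$ (k,b) = 0"
      proof (cases "a \<le> k")
        case True thus ?thesis using Xof_low[of a d k x] k that unfolding X_def by simp
      next
        case False thus ?thesis using lowB[of k b] k that unfolding B_def by simp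
      qed
    qed
    finally have 2: "(X * B) $$ (a,b) = 0" .
    show ?thesis using 1 2 that Bc Xc by (subst index_minus_mat) (auto simp: mc)
  qed
  have "(t_mat d U Mm *\<^sub>v x) \<bullet> (t_mat d U Mm *\<^sub>v x) = (\<Sum>r<K. ((Cm *\<^sub>v z) $ (low_positions d ! r))^2)"
    using tc txr unfolding K_def[symmetric] by (simp add: scalar_prod_def lessThan_atLeast0 power2_eq_square)
  also have "\<dots> = (\<Sum>b<d. \<Sum>a<d. if b < a then ((Cm *\<^sub>v z) $ (a + b*d))^2 else 0)"
    unfolding K_def by (rule lowpos_sum)
  also have "\<dots> = (\<Sum>b<d. \<Sum>a<d. if b < a then ((B * X - X * B) $$ (a,b))^2 else 0)"
    by (intro sum.cong refl) (simp add: Cz)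
  also have "\<dots> = fsq d (B * X - X * B)" by (rule fsq_lower) (rule Rl)
  finally show "(t_mat d U Mm *\<^sub>v x) \<bullet> (t_mat d U Mm *\<^sub>v x)
       = fsq d ((transpose_mat U * transpose_mat Mm * U) * Xof d x - Xof d x * (transpose_mat U * transpose_mat Mm * U))"
    unfolding B_def X_def .
qed



lemma foldr_quad:
  fixes F :: "nat \<Rightarrow> real mat" and x :: "real vec"
  assumes F: "\<And>n. n \<in> set ns \<Longrightarrow> F n \<in> carrier_mat K K" and x: "x \<in> carrier_vec K"
  shows "foldr (\<lambda>n acc. F n + acc) ns (0\<^sub>m K K) \<in> carrier_mat K K \<and>
    x \<bullet> (foldr (\<lambda>n acc. F n + acc) ns (0\<^sub>m K K) *\<^sub>v x) = (\<Sum>n\<leftarrow>ns. x \<bullet> (F n *\<^sub>v x))"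
  using F
proof (induction ns)
  case Nil
  have "x \<bullet> (0\<^sub>m K K *\<^sub>v x) = 0" using x by (simp add: scalar_prod_def)
  thus ?case by simp
next
  case (Cons a ns)
  let ?r = "foldr (\<lambda>n acc. F n + acc) ns (0\<^sub>m K K)"
  have IH: "?r \<in> carrier_mat K K" "x \<bullet> (?r *\<^sub>v x) = (\<Sum>n\<leftarrow>ns. x \<bullet> (F n *\<^sub>v x))"
    using Cons by auto
  have Fa: "F a \<in> carrier_mat K K" using Cons.prems by auto
  have "(F a + ?r) *\<^sub>v x = F a *\<^sub>v x + ?r *\<^sub>v x"
    using Fa IH(1) x by (rule add_mult_distrib_mat_vec)
  hence "x \<bullet> ((F a + ?r) *\<^sub>v x) = x \<bullet> (F a *\<^sub>v x) + x \<bullet> (?r *\<^sub>v x)"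
    using scalar_prod_add_distrib[of x K "F a *\<^sub>v x" "?r *\<^sub>v x"] Fa IH(1) x by simp
  thus ?case using IH Fa by simp
qed

lemma gram_quad: fixes t :: "real mat" assumes t: "t \<in> carrier_mat K K" and x: "x \<in> carrier_vec K"
  shows "x \<bullet> ((transpose_mat t * t) *\<^sub>v x) = (t *\<^sub>v x) \<bullet> (t *\<^sub>v x)"
proof -
  have "(transpose_mat t * t) *\<^sub>v x = transpose_mat t *\<^sub>v (t *\<^sub>v x)"
    using t x by (simp add: assoc_mult_mat_vec[of _ K K _ K])
  moreover have "(transpose_mat t *\<^sub>v (t *\<^sub>v x)) \<bullet> x = (t *\<^sub>v x) \<bullet> (t *\<^sub>v x)"
    using transpose_vec_mult_scalar[OF t x, of "t *\<^sub>v x"] t x by simp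
  moreover have "x \<bullet> (transpose_mat t *\<^sub>v (t *\<^sub>v x)) = (transpose_mat t *\<^sub>v (t *\<^sub>v x)) \<bullet> x"
    using t x by (intro comm_scalar_prod[of _ K]) auto
  ultimately show ?thesis by simp
qed

theorem lemma6:
  fixes d N :: nat and V Vi U T :: "real mat" and \<Lambda> :: "nat \<Rightarrow> nat \<Rightarrow> real"
    and M :: "nat \<Rightarrow> real mat"
  assumes d2: "d \<ge> 2"
    and V: "V \<in> carrier_mat d d" and Vi: "Vi \<in> carrier_mat d d"
    and VVi: "V * Vi = 1\<^sub>m d" and ViV: "Vi * V = 1\<^sub>m d"
    and M: "\<And>n. n \<in> {1..N} \<Longrightarrow> M n = V * diag_of d (\<Lambda> n) * Vi"
    and gpos: "gamma_sep d N \<Lambda> > 0"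
    and U: "U \<in> carrier_mat d d" and Uorth: "transpose_mat U * U = 1\<^sub>m d"
    and Ulow: "\<And>n. n \<in> {1..N} \<Longrightarrow> low_part (transpose_mat U * M n * U) = 0\<^sub>m d d"
    and T: "T = msum (d * (d - 1) div 2) N (\<lambda>n. transpose_mat (t_mat d U (M n)) * t_mat d U (M n))"
  shows "invertible_mat T
    \<and> sigma_min T \<ge> gamma_sep d N \<Lambda> / kappa V ^ 4
    \<and> frob_norm (minv T) \<le> sqrt (real (d * (d - 1)) / 2) * kappa V ^ 4 / gamma_sep d N \<Lambda>"
proof -
  define K where "K = d * (d - 1) div 2"
  have KL: "length (low_positions d) = K" unfolding K_def by (rule length_lowpos)
  have d1: "d \<ge> 1" using d2 by simp
  define s where "s = sigma_min V"
  define S where "S = sigma_max V"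
  define \<gamma> where "\<gamma> = gamma_sep d N \<Lambda>"
  note sf = sigma_facts[OF V Vi ViV d1, folded s_def S_def]
  have s0: "s > 0" and sS: "s \<le> S" using sf by auto
  have S0: "S > 0" using s0 sS by simp
  have kap: "kappa V = S / s" unfolding kappa_def s_def S_def ..
  define c where "c = \<gamma> * (s / S)^4"
  have c0: "c > 0" unfolding c_def \<gamma>_def using gpos s0 S0 by simp
  have cg: "\<gamma> / kappa V ^ 4 = c" unfolding c_def kap by (simp add: power_divide)
  note mc = mult_carrier_mat[of _ d d _ d]
  have Mc: "M n \<in> carrier_mat d d" if "n \<in> {1..N}" for n unfolding M[OF that] using V Vi by (auto intro!: mc)
  have lowB: "(transpose_mat U * transpose_mat (M n) * U) $$ (p,k) = 0" if n: "n \<in> {1..N}" and pk: "p < k" "k < d" for n p k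
  proof -
    define A where "A = transpose_mat U * M n * U"
    have Ac: "A \<in> carrier_mat d d" unfolding A_def using U Mc[OF n] by (auto intro!: mc)
    have "transpose_mat A = transpose_mat U * transpose_mat (M n) * U" unfolding A_def using U Mc[OF n]
      by (simp add: transpose_mult[of _ d d _ d] mc)
    hence "(transpose_mat U * transpose_mat (M n) * U) $$ (p,k) = A $$ (k,p)" using Ac pk by (metis index_transpose_mat(1) carrier_matD less_trans)
    also have "A $$ (k,p) = low_part A $$ (k,p)" unfolding low_part_def using Ac pk by simp
    also have "\<dots> = 0" using Ulow[OF n] pk unfolding A_def[symmetric] by simp
    finally show ?thesis .
  qed
  define F where "F n = transpose_mat (t_mat d U (M n)) * t_mat d U (M n)" for n
  have tc: "t_mat d U (M n) \<in> carrier_mat K K" if "n \<in> {1..N}" for n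
    using tquad(1)[OF U Mc[OF that] lowB[OF that], of "0\<^sub>v K"] KL by simp
  have Fc: "F n \<in> carrier_mat K K" if "n \<in> {1..N}" for n unfolding F_def using tc[OF that] by auto
  have setl: "set [1..<N+1] = {1..N}" by auto
  have TF: "T = foldr (\<lambda>n acc. F n + acc) [1..<N+1] (0\<^sub>m K K)" unfolding T msum_def F_def K_def ..
  have Fh: "\<And>n. n \<in> set [1..<N+1] \<Longrightarrow> F n \<in> carrier_mat K K" using Fc setl by blast
  have Tc: "T \<in> carrier_mat K K" unfolding TF
    using conjunct1[OF foldr_quad[of "[1..<N+1]" F K "0\<^sub>v K", OF Fh zero_carrier_vec]] .

  have quad: "c * (x \<bullet> x) \<le> x \<bullet> (T *\<^sub>v x)" if x: "x \<in> carrier_vec K" for x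
  proof -
    have "x \<bullet> (T *\<^sub>v x) = (\<Sum>n\<leftarrow>[1..<N+1]. x \<bullet> (F n *\<^sub>v x))"
      unfolding TF using conjunct2[OF foldr_quad[of "[1..<N+1]" F K x, OF Fh x]] .
    also have "\<dots> = (\<Sum>n=1..N. x \<bullet> (F n *\<^sub>v x))"
      by (simp only: interv_sum_list_conv_sum_set_nat setl)
    also have "\<dots> = (\<Sum>n=1..N. fsq d (transpose_mat U * transpose_mat (M n) * U * Xof d x - Xof d x * (transpose_mat U * transpose_mat (M n) * U)))"
    proof (intro sum.cong refl)
      fix n assume n: "n \<in> {1..N}"
      have "x \<bullet> (F n *\<^sub>v x) = (t_mat d U (M n) *\<^sub>v x) \<bullet> (t_mat d U (M n) *\<^sub>v x)"
        unfolding F_def by (rule gram_quad[OF tc[OF n] x])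
      also have "\<dots> = fsq d (transpose_mat U * transpose_mat (M n) * U * Xof d x - Xof d x * (transpose_mat U * transpose_mat (M n) * U))"
        by (rule tquad(2)[OF U Mc[OF n] lowB[OF n]]) (use x KL in auto)
      finally show "x \<bullet> (F n *\<^sub>v x) = \<dots>" .
    qed
    also have "\<dots> \<ge> \<gamma> * (s / S)^4 * fsq d (Xof d x)" unfolding \<gamma>_def s_def S_def
      by (rule core[OF d1 V Vi VVi ViV M gpos U Uorth Ulow Xof_carrier Xof_low])
    finally show ?thesis unfolding c_def using xx_fsq[of x d] x KL by simp
  qed
  have normb: "c^2 * (x \<bullet> x) \<le> (T *\<^sub>v x) \<bullet> (T *\<^sub>v x)" if x: "x \<in> carrier_vec K" for x
  proof (cases "x \<bullet> x = 0")
    case True thus ?thesis using sq_nonneg_vec[of "T *\<^sub>v x"] by simp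
  next
    case False
    have p: "x \<bullet> x > 0" using False sq_nonneg_vec[of x] by simp
    have q: "c * (x \<bullet> x) \<le> x \<bullet> (T *\<^sub>v x)" by (rule quad[OF x])
    have "(c * (x \<bullet> x))^2 \<le> (x \<bullet> (T *\<^sub>v x))^2" using q c0 p by (intro power_mono) auto
    also have "\<dots> \<le> (x \<bullet> x) * ((T *\<^sub>v x) \<bullet> (T *\<^sub>v x))" using cs_vec[OF x, of "T *\<^sub>v x"] Tc x by simp
    finally have "(x \<bullet> x) * (c^2 * (x \<bullet> x)) \<le> (x \<bullet> x) * ((T *\<^sub>v x) \<bullet> (T *\<^sub>v x))"
      by (simp add: power2_eq_square algebra_simps)
    thus ?thesis using p by simp
  qed
  have K1: "K \<ge> 1"
  proof -
    have "2 * 1 \<le> d * (d - 1)" using d2 by (intro mult_le_mono) auto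
    thus ?thesis unfolding K_def by simp
  qed
  have smin: "sigma_min T \<ge> c"
  proof -
    define E where "E = {vnorm (T *\<^sub>v x) | x. x \<in> carrier_vec (dim_col T) \<and> vnorm x = 1}"
    have dc: "dim_col T = K" using Tc by simp
    have "vnorm (T *\<^sub>v unit_vec K 0) \<in> E" unfolding E_def dc using unit_sq[of 0 K] K1
      by (intro CollectI exI[of _ "unit_vec K 0"]) (auto simp: vnorm_def)
    hence ne: "E \<noteq> {}" by auto
    have "c \<le> e" if "e \<in> E" for e
    proof -
      obtain x where x: "x \<in> carrier_vec K" "vnorm x = 1" and e: "e = vnorm (T *\<^sub>v x)"
        using \<open>e \<in> E\<close> unfolding E_def dc by auto
      have xx: "x \<bullet> x = 1" using x(2) sq_nonneg_vec[of x] unfolding vnorm_def by simp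
      have "sqrt (c^2) \<le> e" unfolding e vnorm_def using normb[OF x(1)] xx by (intro real_sqrt_le_mono) simp
      thus ?thesis using c0 by simp
    qed
    hence "c \<le> Inf E" using ne by (intro cInf_greatest) auto
    thus ?thesis unfolding sigma_min_def E_def[symmetric] .
  qed
  have "det T \<noteq> 0"
  proof
    assume "det T = 0"
    then obtain v where v: "v \<in> carrier_vec K" "v \<noteq> 0\<^sub>v K" "T *\<^sub>v v = 0\<^sub>v K"
      using det_0_iff_vec_prod_zero_field[OF Tc] by auto
    have "c^2 * (v \<bullet> v) \<le> 0" using normb[OF v(1)] v(3) by simp
    hence "v \<bullet> v \<le> 0" using c0 by (simp add: mult_le_0_iff)
    hence "v \<bullet> v = 0" using sq_nonneg_vec[of v] by simp
    thus False using sq_zero_vec[OF v(1)] v(2) by simp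
  qed
  from det_non_zero_imp_unit[OF Tc this, of undefined]
  obtain Bi where Bi: "Bi \<in> carrier_mat K K" "T * Bi = 1\<^sub>m K" "Bi * T = 1\<^sub>m K"
    unfolding Units_def ring_mat_def by auto
  have inv: "invertible_mat T" unfolding invertible_mat_def inverts_mat_def
    using Tc Bi by (auto intro!: exI[of _ Bi])
  define Ti where "Ti = minv T"
  have Ti: "Ti \<in> carrier_mat K K" "T * Ti = 1\<^sub>m K"
  proof -
    have dr: "dim_row T = K" using Tc by simp
    have "Ti \<in> carrier_mat K K \<and> T * Ti = 1\<^sub>m K \<and> Ti * T = 1\<^sub>m K"
      unfolding Ti_def minv_def dr by (rule someI[of _ Bi]) (use Bi in auto)
    thus "Ti \<in> carrier_mat K K" "T * Ti = 1\<^sub>m K" by auto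
  qed
  have colb: "col Ti j \<bullet> col Ti j \<le> 1 / c^2" if j: "j < K" for j
  proof -
    have "T *\<^sub>v col Ti j = col (T * Ti) j" using col_mult2[OF Tc Ti(1) j] by simp
    also have "\<dots> = unit_vec K j" using Ti(2) j by simp
    finally have "c^2 * (col Ti j \<bullet> col Ti j) \<le> 1" using normb[of "col Ti j"] Ti(1) j unit_sq[OF j] by simp
    thus ?thesis using c0 by (simp add: field_simps)
  qed
  have "fsq K Ti \<le> real K * (1 / c^2)"
  proof -
    have "fsq K Ti = (\<Sum>j<K. col Ti j \<bullet> col Ti j)" by (rule fsq_cols[OF Ti(1)])
    also have "\<dots> \<le> (\<Sum>j<K. 1 / c^2)" by (intro sum_mono colb) auto
    finally show ?thesis by simp
  qed
  hence "frob_norm Ti \<le> sqrt (real K * (1 / c^2))" unfolding frob_norm_def fsq_def[symmetric] using Ti(1)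
    by (simp add: fsq_def)
  also have "\<dots> = sqrt (real K) / c" using c0 by (simp add: real_sqrt_mult real_sqrt_divide)
  also have "sqrt (real K) = sqrt (real (d * (d - 1)) / 2)"
  proof -
    have "even (d * (d - 1))" by (cases "even d") auto
    hence e2: "2 * K = d * (d - 1)" unfolding K_def by simp
    have "real (2 * K) = real (d * (d - 1))" unfolding e2 ..
    hence "real K = real (d * (d - 1)) / 2" by simp
    thus ?thesis by simp
  qed
  finally have fb: "frob_norm (minv T) \<le> sqrt (real (d * (d - 1)) / 2) / c" unfolding Ti_def .
  have "sqrt (real (d * (d - 1)) / 2) / c = sqrt (real (d * (d - 1)) / 2) * kappa V ^ 4 / gamma_sep d N \<Lambda>"
  proof -
    have kp: "kappa V > 0" unfolding kap using s0 S0 by simp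
    have gp: "\<gamma> > 0" unfolding \<gamma>_def by (rule gpos)
    have "1 / c = kappa V ^ 4 / \<gamma>" unfolding cg[symmetric] using kp gp by simp
    thus ?thesis unfolding \<gamma>_def by (metis times_divide_eq_right mult_1_right divide_divide_eq_right)
  qed
  thus ?thesis using inv smin fb cg unfolding \<gamma>_def by simp
qed


end
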